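(* For every integer $k\ge 1$ and every $t\in\left(0,\tfrac{1}{\sqrt{2}}\right]$, $$\frac{|Q_{k}(t^{2})|}{t}\leq 4k^{2}t+4\sum_{j=1}^{k-1}(k-j)\min\{1,(2j-1)t\}.$$
   Context: $T_k$ denotes the Chebyshev polynomial of the first kind: $T_0(t)=1$, $T_1(t)=t$, $T_{k+1}(t)=2tT_k(t)-T_{k-1}(t)$. For each integer $k\ge 0$, $P_k$ and $Q_k$ are the unique polynomials such that $T_{2k}(t)=(-1)^k+P_k(t^2)$ and $T_{2k+1}(t)=(-1)^k(2k+1)t+t\,Q_k(t^2)$ for all real $t$ (so $P_k(0)=Q_k(0)=0$). *)

theory Defs
  imports "HOL-Analysis.Analysis" "HOL-Computational_Algebra.Polynomial"
begin

fun cheb_T :: "nat \<Rightarrow> real poly" where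
  "cheb_T 0 = 1"
| "cheb_T (Suc 0) = [:0, 1:]"
| "cheb_T (Suc (Suc n)) = smult 2 [:0, 1:] * cheb_T (Suc n) - cheb_T n"

definition cheb_P :: "nat \<Rightarrow> real poly" where
  "cheb_P k = (THE p. \<forall>t::real. poly (cheb_T (2*k)) t = (-1)^k + poly p (t^2))"

definition cheb_Q :: "nat \<Rightarrow> real poly" where
  "cheb_Q k = (THE q. \<forall>t::real. poly (cheb_T (2*k+1)) t
                 = (-1)^k * (2*real k+1) * t + t * poly q (t^2))"

end

theory Submission
  imports Defs
begin

lemma cos_step: "cos (y + x) = 2 * cos x * cos y - cos (y - x)" for x y :: real
  by (simp add: cos_add cos_diff)

lemma cheb_cos: "poly (cheb_T n) (cos x) = cos (real n * x)"
proof (induction n rule: cheb_T.induct)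
  case 1 then show ?case by simp
next
  case 2 then show ?case by simp
next
  case (3 n)
  have "cos (real (Suc (Suc n)) * x) = 2 * cos x * cos (real (Suc n) * x) - cos (real n * x)"
    using cos_step[of "real (Suc n) * x" x] by (simp add: algebra_simps)
  then show ?case using 3 by simp
qed

lemma cheb_sin_odd: "poly (cheb_T (2*i+1)) (sin x) = (-1)^i * sin ((2*real i+1) * x)"
proof -
  have "poly (cheb_T (2*i+1)) (sin x) = cos (real (2*i+1) * (pi/2 - x))"
    using cheb_cos[of "2*i+1" "pi/2 - x"] by (simp add: sin_cos_eq)
  also have "real (2*i+1) * (pi/2 - x) = real i * pi + (pi/2 - (2*real i+1) * x)"
    by (simp add: algebra_simps)
  also have "cos (real i * pi + (pi/2 - (2*real i+1) * x)) = (-1)^i * sin ((2*real i+1) * x)"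
    by (simp add: cos_add cos_diff)
  finally show ?thesis .
qed

fun EO :: "nat \<Rightarrow> real poly \<times> real poly" where
  "EO 0 = (1, 1)"
| "EO (Suc n) = (let e = smult 2 [:0,1:] * snd (EO n) - fst (EO n) in (e, smult 2 e - snd (EO n)))"

lemma EO_prop: "poly (cheb_T (2*n)) t = poly (fst (EO n)) (t^2) \<and>
   poly (cheb_T (2*n+1)) t = t * poly (snd (EO n)) (t^2)"
proof (induction n)
  case 0 then show ?case by simp
next
  case (Suc n)
  have a: "2 * Suc n = Suc (Suc (2*n))" and b: "2 * Suc n + 1 = Suc (Suc (2*n+1))" by simp_all
  have e: "poly (cheb_T (2 * Suc n)) t = poly (fst (EO (Suc n))) (t^2)"
    unfolding a using Suc by (simp add: Let_def power2_eq_square algebra_simps)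
  have "poly (cheb_T (2 * Suc n + 1)) t = t * poly (snd (EO (Suc n))) (t^2)"
    unfolding b using Suc e[unfolded a] by (simp add: Let_def power2_eq_square algebra_simps)
  with e show ?case by blast
qed

lemma cheb_Q_prop: "poly (cheb_T (2*k+1)) t = (-1)^k * (2*real k+1) * t + t * poly (cheb_Q k) (t^2)"
proof -
  let ?P = "\<lambda>q. \<forall>t::real. poly (cheb_T (2*k+1)) t = (-1)^k * (2*real k+1) * t + t * poly q (t^2)"
  have ex: "?P (snd (EO k) - [:(-1)^k * (2*real k+1):])"
  proof
    fix t :: real
    have "poly (cheb_T (2*k+1)) t = t * poly (snd (EO k)) (t^2)" using EO_prop by blast
    then show "poly (cheb_T (2*k+1)) t = (-1)^k * (2*real k+1) * t + t * poly (snd (EO k) - [:(-1)^k * (2*real k+1):]) (t^2)"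
      by (simp only: poly_diff poly_pCons poly_0) (simp add: algebra_simps)
  qed
  have un: "q1 = q2" if "?P q1" "?P q2" for q1 q2
  proof -
    have "{0::real<..} \<subseteq> {x. poly (q1 - q2) x = 0}"
    proof
      fix x :: real assume "x \<in> {0<..}"
      then have x: "x > 0" by simp
      have "sqrt x * poly q1 ((sqrt x)^2) = sqrt x * poly q2 ((sqrt x)^2)"
        using that(1)[rule_format, of "sqrt x"] that(2)[rule_format, of "sqrt x"] by linarith
      moreover have "(sqrt x)^2 = x" "sqrt x \<noteq> 0" using x by auto
      ultimately show "x \<in> {x. poly (q1 - q2) x = 0}" by simp
    qed
    moreover have "infinite {0::real<..}"
      by (rule infinite_Ioi)
    ultimately have "infinite {x. poly (q1 - q2) x = 0}" by (metis finite_subset)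
    then have "q1 - q2 = 0" using poly_roots_finite by blast
    then show ?thesis by simp
  qed
  have "?P (cheb_Q k)" unfolding cheb_Q_def
    apply (rule theI[of ?P, OF ex])
    by (rule un, assumption, rule ex)
  then show ?thesis by blast
qed

lemma sin_mult_le: "\<bar>sin (real n * x)\<bar> \<le> real n * \<bar>sin x\<bar>"
proof (induction n)
  case 0 then show ?case by simp
next
  case (Suc n)
  have "sin (real (Suc n) * x) = sin (real n * x) * cos x + cos (real n * x) * sin x"
    by (simp add: algebra_simps sin_add)
  also have "\<bar>\<dots>\<bar> \<le> \<bar>sin (real n * x)\<bar> * \<bar>cos x\<bar> + \<bar>cos (real n * x)\<bar> * \<bar>sin x\<bar>"
    by (metis abs_mult abs_triangle_ineq)
  also have "\<dots> \<le> \<bar>sin (real n * x)\<bar> * 1 + 1 * \<bar>sin x\<bar>"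
    by (intro add_mono mult_mono) auto
  finally show ?case using Suc by (simp add: algebra_simps)
qed

lemma sum_odd_sin: "(\<Sum>i=1..m. sin ((2 * real i - 1) * x)) * sin x = (sin (real m * x))^2"
proof (induction m)
  case 0 then show ?case by simp
next
  case (Suc m)
  have id: "sin ((2*real (Suc m) - 1)*x) * sin x = (sin (real (Suc m) * x))^2 - (sin (real m * x))^2"
  proof -
    define a where "a = sin (real m * x)"
    define b where "b = cos (real m * x)"
    have 1: "sin (real (Suc m) * x) = a * cos x + b * sin x"
      unfolding a_def b_def by (simp add: algebra_simps sin_add)
    have "(2*real (Suc m) - 1)*x = 2 * (real m * x) + x" by (simp add: algebra_simps)
    then have 2: "sin ((2*real (Suc m) - 1)*x) = 2*a*b*cos x + (b^2 - a^2) * sin x"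
      unfolding a_def b_def by (simp add: sin_add sin_double cos_double)
    have p1: "a^2 + b^2 = 1" unfolding a_def b_def by simp
    have p2: "(sin x)^2 + (cos x)^2 = 1" by simp
    show ?thesis unfolding 1 2 a_def[symmetric]
      using p1 p2 by algebra
  qed
  show ?case using Suc id by (simp add: distrib_right)
qed

lemma key_identity: "sin ((2 * real k + 1) * x) - (2 * real k + 1) * sin x = - 4 * sin x * (\<Sum>j=1..k. (sin (real j * x))^2)"
proof (induction k)
  case 0 then show ?case by simp
next
  case (Suc k)
  define y where "y = real (Suc k) * x"
  have e1: "(2*real (Suc k)+1)*x = 2*y + x" and e2: "(2*real k+1)*x = 2*y - x"
    unfolding y_def by (simp_all add: algebra_simps)
  have "sin (2*y + x) - sin (2*y - x) = 2 * cos (2*y) * sin x"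
    by (simp add: sin_add sin_diff)
  also have "\<dots> = 2 * sin x - 4 * sin x * (sin y)^2"
    unfolding cos_double_sin by (simp add: algebra_simps)
  finally have d: "sin (2*y + x) - sin (2*y - x) = 2 * sin x - 4 * sin x * (sin y)^2" .
  have "sin ((2*real (Suc k)+1)*x) - (2*real (Suc k)+1) * sin x
      = (sin ((2*real k+1)*x) - (2*real k+1) * sin x) + (sin (2*y + x) - sin (2*y - x) - 2 * sin x)"
    unfolding e1 e2[symmetric] by (simp add: algebra_simps)
  also have "\<dots> = -4 * sin x * (\<Sum>j=1..Suc k. (sin (real j * x))^2)"
    unfolding Suc d by (simp add: y_def algebra_simps)
  finally show ?case .
qed

lemma double_sum_bound:
  fixes m :: "nat \<Rightarrow> real"
  assumes "\<And>i. i \<ge> 1 \<Longrightarrow> m i \<le> (2*real i - 1) * t"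
  shows "(\<Sum>j=1..k. \<Sum>i=1..j. m i) \<le> (real k)^2 * t + (\<Sum>j=1..k. real (k - j) * m j)"
proof (induction k)
  case 0 then show ?case by simp
next
  case (Suc k)
  have s1: "(\<Sum>j=1..Suc k. real (Suc k - j) * m j) = (\<Sum>j=1..k. real (k - j) * m j) + (\<Sum>j=1..k. m j)"
  proof -
    have "(\<Sum>j=1..Suc k. real (Suc k - j) * m j) = (\<Sum>j=1..k. real (Suc k - j) * m j)"
      by simp
    also have "\<dots> = (\<Sum>j=1..k. real (k - j) * m j + m j)"
      by (intro sum.cong) (auto simp: Suc_diff_le algebra_simps)
    finally show ?thesis by (simp add: sum.distrib)
  qed
  have s2: "(\<Sum>i=1..Suc k. m i) = (\<Sum>i=1..k. m i) + m (Suc k)" by simp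
  have r: "2*real (Suc k) - 1 = 2 * real k + 1" by simp
  have mk: "m (Suc k) \<le> (2 * real k + 1) * t" using assms[of "Suc k"] unfolding r by simp
  have "(real (Suc k))^2 * t = (real k)^2 * t + (2 * real k + 1) * t"
    by (simp add: algebra_simps power2_eq_square)
  then show ?case using Suc s1 s2 mk by simp
qed

theorem mainTheorem3:
  fixes k :: nat and t :: real
  assumes "k \<ge> 1" and "0 < t" and "t \<le> 1 / sqrt 2"
  shows "\<bar>poly (cheb_Q k) (t^2)\<bar> / t
           \<le> 4 * (real k)^2 * t + 4 * (\<Sum>j=1..k-1. real (k - j) * min 1 ((2 * real j - 1) * t))"
proof -
  have t1: "t \<le> 1"
  proof -
    have "1 / sqrt 2 \<le> (1::real)" by (simp add: divide_le_eq)
    then show ?thesis using assms(3) by linarith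
  qed
  define x where "x = arcsin t"
  have sx: "sin x = t" unfolding x_def using t1 assms(2) by simp
  define S where "S = (\<Sum>j=1..k. (sin (real j * x))^2)"
  define D where "D = (\<Sum>j=1..k. \<Sum>i=1..j. sin ((2 * real i - 1) * x))"
  have sj: "(sin (real j * x))^2 = t * (\<Sum>i=1..j. sin ((2 * real i - 1) * x))" for j
    using sum_odd_sin[where m=j and x=x] unfolding sx by (simp add: mult.commute)
  have SD: "S = t * D"
    unfolding S_def D_def sum_distrib_left sj ..
  have "t * poly (cheb_Q k) (t^2) = poly (cheb_T (2*k+1)) t - (-1)^k * (2*real k+1) * t"
    using cheb_Q_prop[where k=k and t=t] by simp
  also have "\<dots> = (-1)^k * (sin ((2*real k+1)*x) - (2*real k+1) * sin x)"
    using cheb_sin_odd[where i=k and x=x] by (simp add: sx algebra_simps)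
  also have "\<dots> = (-1)^k * (-4 * t * S)"
    using key_identity[where k=k and x=x] unfolding S_def sx by simp
  finally have "t * poly (cheb_Q k) (t^2) = t * ((-1)^k * (-4 * S))" by simp
  then have Qv: "poly (cheb_Q k) (t^2) = (-1)^k * (-4 * S)" by (metis assms(2) mult_cancel_left order_less_irrefl)
  have "S \<ge> 0" unfolding S_def by (intro sum_nonneg) simp
  then have "\<bar>poly (cheb_Q k) (t^2)\<bar> / t = 4 * S / t" using Qv by (simp add: abs_mult)
  also have "\<dots> = 4 * D" using SD assms(2) by simp
  finally have L: "\<bar>poly (cheb_Q k) (t^2)\<bar> / t = 4 * D" .
  define mm where "mm = (\<lambda>i::nat. min 1 ((2 * real i - 1) * t))"
  have si: "sin ((2 * real i - 1) * x) \<le> mm i" if "i \<ge> 1" for i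
  proof -
    have r: "2*real i - 1 = real (2*i - 1)" using that by simp
    have "sin ((2 * real i - 1) * x) \<le> 1" by simp
    moreover have "sin ((2 * real i - 1) * x) \<le> (2*real i - 1) * t"
      using sin_mult_le[where n="2*i - 1" and x=x] unfolding r sx using assms(2) by simp
    ultimately show ?thesis unfolding mm_def by simp
  qed
  have "D \<le> (\<Sum>j=1..k. \<Sum>i=1..j. mm i)"
    unfolding D_def by (intro sum_mono) (auto intro: si)
  also have "\<dots> \<le> (real k)^2 * t + (\<Sum>j=1..k. real (k - j) * mm j)"
    by (rule double_sum_bound) (simp add: mm_def)
  also have "(\<Sum>j=1..k. real (k - j) * mm j) = (\<Sum>j=1..k-1. real (k - j) * mm j)"
  proof -
    obtain k' where k': "k = Suc k'" using assms(1) by (cases k) auto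
    show ?thesis unfolding k' by simp
  qed
  finally have "D \<le> (real k)^2 * t + (\<Sum>j=1..k-1. real (k - j) * mm j)" .
  then show ?thesis unfolding L mm_def by simp
qed

end
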